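(* Let $P$ be a pseudotree and let $Z$ be a set of vertices such that $\alpha(P) > \alpha(P-Z)$. Then there exist three (possibly non-distinct) vertices $u,v,w \in Z \cap V(P)$ such that $\alpha(P) > \alpha(P-\{u,v,w\})$.
   Context: A pseudotree is a connected finite simple graph containing at most one cycle. $\alpha(H)$ denotes the maximum size of an independent set of a graph $H$. For a vertex set $S$, $P - S$ denotes the graph obtained from $P$ by deleting the vertices of $S\cap V(P)$ and their incident edges. *)

theory Defs
  imports Main
begin

definition simple_graph :: "'a set \<Rightarrow> 'a set set \<Rightarrow> bool" where
  "simple_graph V E \<longleftrightarrow> finite V \<and>
     (\<forall>e\<in>E. \<exists>u v. u \<noteq> v \<and> u \<in> V \<and> v \<in> V \<and> e = {u, v})"

definition graph_connected :: "'a set \<Rightarrow> 'a set set \<Rightarrow> bool" where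
  "graph_connected V E \<longleftrightarrow> V \<noteq> {} \<and>
     (\<forall>u\<in>V. \<forall>v\<in>V. (u, v) \<in> {(x, y). {x, y} \<in> E}\<^sup>*)"

definition is_cycle :: "'a set set \<Rightarrow> 'a set set \<Rightarrow> bool" where
  "is_cycle E C \<longleftrightarrow> (\<exists>vs. length vs \<ge> 3 \<and> distinct vs \<and>
     (\<forall>i<length vs. {vs ! i, vs ! ((i + 1) mod length vs)} \<in> E) \<and>
     C = {{vs ! i, vs ! ((i + 1) mod length vs)} | i. i < length vs})"

definition pseudotree :: "'a set \<Rightarrow> 'a set set \<Rightarrow> bool" where
  "pseudotree V E \<longleftrightarrow> simple_graph V E \<and> graph_connected V E \<and>
     (\<forall>C1 C2. is_cycle E C1 \<longrightarrow> is_cycle E C2 \<longrightarrow> C1 = C2)"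

definition independent_set :: "'a set \<Rightarrow> 'a set set \<Rightarrow> 'a set \<Rightarrow> bool" where
  "independent_set V E S \<longleftrightarrow> S \<subseteq> V \<and> (\<forall>u\<in>S. \<forall>v\<in>S. {u, v} \<notin> E)"

definition alpha :: "'a set \<Rightarrow> 'a set set \<Rightarrow> nat" where
  "alpha V E = Max (card ` {S. independent_set V E S})"

definition del_verts :: "'a set \<Rightarrow> 'a set set \<Rightarrow> 'a set \<Rightarrow> 'a set \<times> 'a set set" where
  "del_verts V E S = (V - S, {e \<in> E. e \<inter> S = {}})"

end

theory Submission
  imports Defs
begin

definition maxind :: "'a set \<Rightarrow> 'a set set \<Rightarrow> 'a set \<Rightarrow> bool" where
  "maxind V E J \<longleftrightarrow> independent_set V E J \<and> card J = alpha V E"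

definition blocks :: "'a set \<Rightarrow> 'a set set \<Rightarrow> 'a set \<Rightarrow> bool" where
  "blocks V E Z \<longleftrightarrow> (\<forall>J. maxind V E J \<longrightarrow> J \<inter> Z \<noteq> {})"

lemma ind_fin: "finite V \<Longrightarrow> finite {S. independent_set V E S}"
  unfolding independent_set_def by (rule finite_subset[of _ "Pow V"]) auto

lemma alpha_ge: "finite V \<Longrightarrow> independent_set V E J \<Longrightarrow> card J \<le> alpha V E"
  unfolding alpha_def by (rule Max_ge) (simp_all add: ind_fin)

lemma alpha_ex: "finite V \<Longrightarrow> \<exists>J. maxind V E J"
proof -
  assume f: "finite V"
  have "{} \<in> {S. independent_set V E S}" by (simp add: independent_set_def)
  hence "alpha V E \<in> card ` {S. independent_set V E S}"
    unfolding alpha_def by (intro Max_in) (auto simp: ind_fin[OF f])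
  thus ?thesis unfolding maxind_def by auto
qed

lemma ind_fin_set: "finite V \<Longrightarrow> independent_set V E J \<Longrightarrow> finite J"
  unfolding independent_set_def using finite_subset by blast

lemma ind_del: "independent_set (V - S) {e\<in>E. e \<inter> S = {}} K \<longleftrightarrow> independent_set V E K \<and> K \<inter> S = {}"
  unfolding independent_set_def by blast

lemma blocks_iff:
  assumes "finite V"
  shows "blocks V E Z \<longleftrightarrow> alpha (V - Z) {e\<in>E. e \<inter> Z = {}} < alpha V E"
proof
  assume b: "blocks V E Z"
  obtain K where K: "maxind (V - Z) {e\<in>E. e \<inter> Z = {}} K" using alpha_ex[of "V - Z"] assms by auto
  hence Ki: "independent_set V E K" "K \<inter> Z = {}" using ind_del[of V Z E K] unfolding maxind_def by auto
  have "card K \<le> alpha V E" using alpha_ge[OF assms Ki(1)] .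
  moreover have "card K \<noteq> alpha V E" using b Ki unfolding blocks_def maxind_def by blast
  ultimately show "alpha (V - Z) {e\<in>E. e \<inter> Z = {}} < alpha V E" using K unfolding maxind_def by simp
next
  assume l: "alpha (V - Z) {e\<in>E. e \<inter> Z = {}} < alpha V E"
  show "blocks V E Z" unfolding blocks_def
  proof (intro allI impI)
    fix J assume J: "maxind V E J"
    show "J \<inter> Z \<noteq> {}"
    proof
      assume "J \<inter> Z = {}"
      hence "independent_set (V - Z) {e\<in>E. e \<inter> Z = {}} J" using J ind_del[of V Z E J] unfolding maxind_def by auto
      hence "card J \<le> alpha (V - Z) {e\<in>E. e \<inter> Z = {}}" using alpha_ge[of "V - Z"] assms by auto
      thus False using J l unfolding maxind_def by simp
    qed
  qed
qed

lemma blocks_nonempty: "finite V \<Longrightarrow> blocks V E Z \<Longrightarrow> Z \<inter> V \<noteq> {}"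
proof -
  assume f: "finite V" and b: "blocks V E Z"
  obtain J where J: "maxind V E J" using alpha_ex[OF f] by blast
  hence "J \<inter> Z \<noteq> {}" using b unfolding blocks_def by blast
  moreover have "J \<subseteq> V" using J unfolding maxind_def independent_set_def by blast
  ultimately show ?thesis by blast
qed

lemma alpha_del_le: "finite V \<Longrightarrow> alpha (V - S) {e\<in>E. e \<inter> S = {}} \<le> alpha V E"
proof -
  assume f: "finite V"
  obtain K where K: "maxind (V - S) {e\<in>E. e \<inter> S = {}} K" using alpha_ex[of "V - S"] f by auto
  hence "independent_set V E K" using ind_del[of V S E K] unfolding maxind_def by auto
  from alpha_ge[OF f this] show ?thesis using K unfolding maxind_def by auto
qed

definition closed_set :: "'a set set \<Rightarrow> 'a set \<Rightarrow> bool" where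
  "closed_set E A \<longleftrightarrow> (\<forall>e\<in>E. e \<subseteq> A \<or> e \<inter> A = {})"

lemma closed_union_ind:
  assumes "closed_set E A" "independent_set V E K" "K \<inter> A = {}" "independent_set V E L" "L \<subseteq> A"
  shows "independent_set V E (K \<union> L)"
proof -
  have KV: "K \<subseteq> V" and LV: "L \<subseteq> V" using assms(2,4) unfolding independent_set_def by auto
  have Ki: "\<And>u v. u \<in> K \<Longrightarrow> v \<in> K \<Longrightarrow> {u,v} \<notin> E" using assms(2) unfolding independent_set_def by auto
  have Li: "\<And>u v. u \<in> L \<Longrightarrow> v \<in> L \<Longrightarrow> {u,v} \<notin> E" using assms(4) unfolding independent_set_def by auto
  have cl: "\<And>e. e \<in> E \<Longrightarrow> e \<subseteq> A \<or> e \<inter> A = {}" using assms(1) unfolding closed_set_def by auto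
  have uA: "\<And>u. u \<in> K \<union> L \<Longrightarrow> (u \<in> A) = (u \<in> L)" using assms(3,5) by auto
  have "{u,v} \<notin> E" if u: "u \<in> K \<union> L" and v: "v \<in> K \<union> L" for u v
  proof
    assume e: "{u,v} \<in> E"
    from cl[OF e] show False
    proof
      assume "{u,v} \<subseteq> A"
      hence "u \<in> L" "v \<in> L" using uA u v by auto
      thus False using Li e by auto
    next
      assume "{u,v} \<inter> A = {}"
      hence "u \<in> K" "v \<in> K" using uA u v by auto
      thus False using Ki e by auto
    qed
  qed
  thus ?thesis unfolding independent_set_def using KV LV by auto
qed

lemma closed_max1:
  assumes f: "finite V" and c: "closed_set E A" and J: "maxind V E J"
  shows "maxind (V - A) {e\<in>E. e \<inter> A = {}} (J - A)"
proof -
  have Ji: "independent_set V E J" using J unfolding maxind_def by auto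
  have JA: "independent_set V E (J - A)" "independent_set V E (J \<inter> A)"
    using Ji unfolding independent_set_def by blast+
  hence i1: "independent_set (V - A) {e\<in>E. e \<inter> A = {}} (J - A)" using ind_del[of V A E "J - A"] by auto
  have fJ: "finite J" using ind_fin_set[OF f Ji] .
  have le: "card (J - A) \<le> alpha (V - A) {e\<in>E. e \<inter> A = {}}" using alpha_ge[of "V - A"] f i1 by auto
  have "alpha (V - A) {e\<in>E. e \<inter> A = {}} \<le> card (J - A)"
  proof (rule ccontr)
    assume lt: "\<not> alpha (V - A) {e\<in>E. e \<inter> A = {}} \<le> card (J - A)"
    obtain K where K: "maxind (V - A) {e\<in>E. e \<inter> A = {}} K" using alpha_ex[of "V - A"] f by auto
    hence Ki: "independent_set V E K" "K \<inter> A = {}" using ind_del[of V A E K] unfolding maxind_def by auto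
    have u: "independent_set V E (K \<union> (J \<inter> A))" by (rule closed_union_ind[OF c Ki JA(2)]) auto
    have fK: "finite K" using ind_fin_set[OF f Ki(1)] .
    have "card (K \<union> (J \<inter> A)) = card K + card (J \<inter> A)"
      by (rule card_Un_disjoint) (use fK fJ Ki(2) in auto)
    moreover have "card J = card (J - A) + card (J \<inter> A)"
      using card_Int_Diff[OF fJ, of A] by simp
    moreover have "card K > card (J - A)" using K lt unfolding maxind_def by auto
    ultimately have "card (K \<union> (J \<inter> A)) > alpha V E" using J unfolding maxind_def by auto
    thus False using alpha_ge[OF f u] by auto
  qed
  thus ?thesis unfolding maxind_def using i1 le by auto
qed

lemma closed_max2:
  assumes f: "finite V" and c: "closed_set E A" and ZA: "Z \<inter> A = {}" and b: "blocks V E Z"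
  shows "blocks (V - A) {e\<in>E. e \<inter> A = {}} Z"
  unfolding blocks_def
proof (intro allI impI)
  fix K assume K: "maxind (V - A) {e\<in>E. e \<inter> A = {}} K"
  hence Ki: "independent_set V E K" "K \<inter> A = {}" using ind_del[of V A E K] unfolding maxind_def by auto
  obtain J where J: "maxind V E J" using alpha_ex[OF f] by blast
  have Ji: "independent_set V E J" using J unfolding maxind_def by auto
  have JA: "independent_set V E (J \<inter> A)" using Ji unfolding independent_set_def by blast
  have u: "independent_set V E (K \<union> (J \<inter> A))" by (rule closed_union_ind[OF c Ki JA]) auto
  have fK: "finite K" using ind_fin_set[OF f Ki(1)] .
  have fJ: "finite J" using ind_fin_set[OF f Ji] .
  have m1: "maxind (V - A) {e\<in>E. e \<inter> A = {}} (J - A)" using closed_max1[OF f c J] .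
  have "card (K \<union> (J \<inter> A)) = card K + card (J \<inter> A)"
    by (rule card_Un_disjoint) (use fK fJ Ki(2) in auto)
  moreover have "card J = card (J - A) + card (J \<inter> A)"
    using card_Int_Diff[OF fJ, of A] by simp
  moreover have "card K = card (J - A)" using K m1 unfolding maxind_def by auto
  ultimately have "card (K \<union> (J \<inter> A)) = alpha V E" using J unfolding maxind_def by auto
  hence "maxind V E (K \<union> (J \<inter> A))" using u unfolding maxind_def by auto
  hence "(K \<union> (J \<inter> A)) \<inter> Z \<noteq> {}" using b unfolding blocks_def by blast
  thus "K \<inter> Z \<noteq> {}" using ZA by blast
qed

lemma closed_back:
  assumes f: "finite V" and c: "closed_set E A" and b: "blocks (V - A) {e\<in>E. e \<inter> A = {}} T"
  shows "blocks V E T"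
  unfolding blocks_def
proof (intro allI impI)
  fix J assume J: "maxind V E J"
  have "(J - A) \<inter> T \<noteq> {}" using closed_max1[OF f c J] b unfolding blocks_def by blast
  thus "J \<inter> T \<noteq> {}" by blast
qed

lemma sg_edge: "simple_graph V E \<Longrightarrow> {u,v} \<in> E \<Longrightarrow> u \<noteq> v \<and> u \<in> V \<and> v \<in> V"
proof -
  assume s: "simple_graph V E" and e: "{u,v} \<in> E"
  then obtain a b where ab: "a \<noteq> b" "a \<in> V" "b \<in> V" "{u,v} = {a,b}" unfolding simple_graph_def by blast
  from ab(4) have "(u = a \<and> v = b) \<or> (u = b \<and> v = a)" by (simp add: doubleton_eq_iff)
  thus ?thesis using ab by auto
qed

lemma sg_noloop: "simple_graph V E \<Longrightarrow> {u} \<notin> E"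
  using sg_edge[of V E u u] by auto

lemma ind_edge: "independent_set V E J \<Longrightarrow> u \<in> J \<Longrightarrow> v \<in> J \<Longrightarrow> {u,v} \<notin> E"
  unfolding independent_set_def by auto

lemma ind_subset: "independent_set V E J \<Longrightarrow> K \<subseteq> J \<Longrightarrow> independent_set V E K"
  unfolding independent_set_def by blast

lemma ind_insert:
  assumes "independent_set V E K" "z \<in> V" "{z} \<notin> E" "\<And>u. u \<in> K \<Longrightarrow> {z,u} \<notin> E"
  shows "independent_set V E (insert z K)"
  using assms unfolding independent_set_def by (auto simp: insert_commute)

locale leafctx =
  fixes V :: "'a set" and E x y
  assumes fin: "finite V" and sg: "simple_graph V E" and xy: "{x,y} \<in> E"
    and lf: "\<And>u. {x,u} \<in> E \<Longrightarrow> u = y"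
begin

abbreviation "V' \<equiv> V - {x,y}"
abbreviation "E' \<equiv> {e\<in>E. e \<inter> {x,y} = {}}"

lemma xyne: "x \<noteq> y" "x \<in> V" "y \<in> V" using sg_edge[OF sg xy] by auto

lemma finV': "finite V'" using fin by auto

lemma ind'_iff: "independent_set V' E' K \<longleftrightarrow> independent_set V E K \<and> K \<inter> {x,y} = {}"
  using ind_del[of V "{x,y}" E K] .

lemma add_x: "independent_set V' E' K \<Longrightarrow> independent_set V E (insert x K)"
proof -
  assume K: "independent_set V' E' K"
  hence Ki: "independent_set V E K" "x \<notin> K" "y \<notin> K" using ind'_iff by auto
  show ?thesis
  proof (rule ind_insert[OF Ki(1) xyne(2) sg_noloop[OF sg]])
    fix u assume "u \<in> K" thus "{x,u} \<notin> E" using lf Ki(3) by blast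
  qed
qed

lemma add_y: "independent_set V' E' K \<Longrightarrow> (\<And>r. r \<in> K \<Longrightarrow> {y,r} \<notin> E) \<Longrightarrow> independent_set V E (insert y K)"
proof -
  assume K: "independent_set V' E' K" and R: "\<And>r. r \<in> K \<Longrightarrow> {y,r} \<notin> E"
  have Ki: "independent_set V E K" using K ind'_iff by blast
  show ?thesis by (rule ind_insert[OF Ki xyne(3) sg_noloop[OF sg]]) (rule R)
qed

lemma not_both: "independent_set V E J \<Longrightarrow> \<not> (x \<in> J \<and> y \<in> J)"
  using ind_edge[of V E J x y] xy by blast

lemma alpha_leaf: "alpha V E = alpha V' E' + 1"
proof (rule antisym)
  obtain J where J: "maxind V E J" using alpha_ex[OF fin] by blast
  have Ji: "independent_set V E J" using J unfolding maxind_def by auto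
  have fJ: "finite J" using ind_fin_set[OF fin Ji] .
  have i': "independent_set V' E' (J - {x,y})" using ind'_iff ind_subset[OF Ji, of "J - {x,y}"] by blast
  have "card (J \<inter> {x,y}) \<le> 1"
  proof -
    have "J \<inter> {x,y} \<subseteq> {x} \<or> J \<inter> {x,y} \<subseteq> {y}" using not_both[OF Ji] by auto
    thus ?thesis
    proof
      assume "J \<inter> {x,y} \<subseteq> {x}" from card_mono[OF _ this] show ?thesis by simp
    next
      assume "J \<inter> {x,y} \<subseteq> {y}" from card_mono[OF _ this] show ?thesis by simp
    qed
  qed
  moreover have "card J = card (J \<inter> {x,y}) + card (J - {x,y})" using card_Int_Diff[OF fJ] .
  moreover have "card (J - {x,y}) \<le> alpha V' E'" using alpha_ge[OF finV' i'] .
  ultimately show "alpha V E \<le> alpha V' E' + 1" using J unfolding maxind_def by linarith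
next
  obtain K where K: "maxind V' E' K" using alpha_ex[OF finV'] by blast
  have Ki: "independent_set V' E' K" using K unfolding maxind_def by auto
  have i: "independent_set V E (insert x K)" using add_x[OF Ki] .
  have "x \<notin> K" using Ki ind'_iff by auto
  moreover have "finite K" using ind_fin_set[OF finV' Ki] .
  ultimately have "card (insert x K) = alpha V' E' + 1" using K unfolding maxind_def by auto
  thus "alpha V' E' + 1 \<le> alpha V E" using alpha_ge[OF fin i] by auto
qed

lemma leaf_b: "maxind V E J \<Longrightarrow> x \<in> J \<or> y \<in> J"
proof (rule ccontr)
  assume J: "maxind V E J" and n: "\<not> (x \<in> J \<or> y \<in> J)"
  have Ji: "independent_set V E J" using J unfolding maxind_def by auto
  have "independent_set V E (insert x J)"
  proof (rule ind_insert[OF Ji xyne(2) sg_noloop[OF sg]])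
    fix u assume "u \<in> J" thus "{x,u} \<notin> E" using lf n by blast
  qed
  moreover have "card (insert x J) = card J + 1" using n ind_fin_set[OF fin Ji] by auto
  ultimately have "card J + 1 \<le> alpha V E" using alpha_ge[OF fin] by metis
  thus False using J unfolding maxind_def by simp
qed

lemma leaf_c: "maxind V E J \<Longrightarrow> maxind V' E' (J - {x,y})"
proof -
  assume J: "maxind V E J"
  have Ji: "independent_set V E J" using J unfolding maxind_def by auto
  have fJ: "finite J" using ind_fin_set[OF fin Ji] .
  have i': "independent_set V' E' (J - {x,y})" using ind'_iff ind_subset[OF Ji, of "J - {x,y}"] by blast
  have "J \<inter> {x,y} = {x} \<or> J \<inter> {x,y} = {y}" using not_both[OF Ji] leaf_b[OF J] by auto
  hence "card (J \<inter> {x,y}) = 1" by auto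
  moreover have "card J = card (J \<inter> {x,y}) + card (J - {x,y})" using card_Int_Diff[OF fJ] .
  ultimately have "card (J - {x,y}) = alpha V' E'" using J alpha_leaf unfolding maxind_def by linarith
  thus ?thesis using i' unfolding maxind_def by auto
qed

lemma leaf_a: "maxind V' E' K \<Longrightarrow> maxind V E (insert x K)"
proof -
  assume K: "maxind V' E' K"
  have Ki: "independent_set V' E' K" using K unfolding maxind_def by auto
  have "x \<notin> K" using Ki ind'_iff by auto
  moreover have "finite K" using ind_fin_set[OF finV' Ki] .
  ultimately have "card (insert x K) = alpha V E" using K alpha_leaf unfolding maxind_def by auto
  thus ?thesis using add_x[OF Ki] unfolding maxind_def by auto
qed

lemma leaf_y: "maxind V' E' K \<Longrightarrow> (\<And>r. r \<in> K \<Longrightarrow> {y,r} \<notin> E) \<Longrightarrow> maxind V E (insert y K)"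
proof -
  assume K: "maxind V' E' K" and R: "\<And>r. r \<in> K \<Longrightarrow> {y,r} \<notin> E"
  have Ki: "independent_set V' E' K" using K unfolding maxind_def by auto
  have "y \<notin> K" using Ki ind'_iff by auto
  moreover have "finite K" using ind_fin_set[OF finV' Ki] .
  ultimately have "card (insert y K) = alpha V E" using K alpha_leaf unfolding maxind_def by auto
  thus ?thesis using add_y[OF Ki R] unfolding maxind_def by auto
qed

end

lemma cyc_union:
  assumes "length vs > 0"
  shows "\<Union>{{vs ! i, vs ! ((i + 1) mod length vs)} | i. i < length vs} = set vs"
proof
  show "\<Union>{{vs ! i, vs ! ((i + 1) mod length vs)} | i. i < length vs} \<subseteq> set vs"
    using assms by auto
next
  show "set vs \<subseteq> \<Union>{{vs ! i, vs ! ((i + 1) mod length vs)} | i. i < length vs}"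
  proof
    fix z assume "z \<in> set vs"
    then obtain i where i: "i < length vs" "z = vs ! i" by (auto simp: in_set_conv_nth)
    thus "z \<in> \<Union>{{vs ! i, vs ! ((i + 1) mod length vs)} | i. i < length vs}" by blast
  qed
qed

lemma is_cycle_union:
  assumes "is_cycle E C"
  shows "\<exists>vs. length vs \<ge> 3 \<and> distinct vs \<and> \<Union>C = set vs \<and>
     C = {{vs ! i, vs ! ((i + 1) mod length vs)} | i. i < length vs}"
proof -
  obtain vs where vs: "length vs \<ge> 3" "distinct vs"
     "C = {{vs ! i, vs ! ((i + 1) mod length vs)} | i. i < length vs}"
    using assms unfolding is_cycle_def by blast
  have "length vs > 0" using vs(1) by linarith
  from cyc_union[OF this] have "\<Union>C = set vs" using vs(3) by simp
  thus ?thesis using vs by blast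
qed

definition nbstep :: "'a set set \<Rightarrow> 'a \<times> 'a \<Rightarrow> 'a \<times> 'a" where
  "nbstep E pq = (snd pq, SOME r. {snd pq, r} \<in> E \<and> r \<noteq> fst pq)"

lemma walk_cycle:
  assumes sg: "simple_graph V E"
    and deg: "\<And>z. z \<in> V \<Longrightarrow> \<exists>y1 y2. y1 \<noteq> y2 \<and> {z,y1} \<in> E \<and> {z,y2} \<in> E"
    and ab: "{a,b} \<in> E"
  shows "\<exists>D. is_cycle E D \<and> (a \<in> \<Union>D \<longrightarrow> b \<in> \<Union>D)"
proof -
  define st where "st n = (nbstep E ^^ n) (a,b)" for n
  define w where "w n = fst (st n)" for n
  have stS: "st (Suc n) = nbstep E (st n)" for n unfolding st_def by simp
  have inv: "{fst (st n), snd (st n)} \<in> E" for n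
  proof (induction n)
    case 0 show ?case using ab unfolding st_def by simp
  next
    case (Suc n)
    let ?p = "fst (st n)" and ?q = "snd (st n)"
    have "?q \<in> V" using sg_edge[OF sg Suc.IH] by blast
    then obtain y1 y2 where y: "y1 \<noteq> y2" "{?q,y1} \<in> E" "{?q,y2} \<in> E" using deg by blast
    have "\<exists>r. {?q, r} \<in> E \<and> r \<noteq> ?p" using y by metis
    hence "{?q, SOME r. {?q, r} \<in> E \<and> r \<noteq> ?p} \<in> E" by (rule someI2_ex) blast
    thus ?case unfolding stS nbstep_def by simp
  qed
  have W1: "snd (st n) = w (Suc n)" for n unfolding w_def stS nbstep_def by simp
  have W2: "{w n, w (Suc n)} \<in> E" for n using inv[of n] W1[of n] unfolding w_def by simp
  have W3: "w (Suc (Suc n)) \<noteq> w n" for n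
  proof -
    let ?p = "fst (st n)" and ?q = "snd (st n)"
    have "?q \<in> V" using sg_edge[OF sg inv[of n]] by blast
    then obtain y1 y2 where y: "y1 \<noteq> y2" "{?q,y1} \<in> E" "{?q,y2} \<in> E" using deg by blast
    have "\<exists>r. {?q, r} \<in> E \<and> r \<noteq> ?p" using y by metis
    hence "(SOME r. {?q, r} \<in> E \<and> r \<noteq> ?p) \<noteq> ?p" by (rule someI2_ex) blast
    moreover have "w (Suc (Suc n)) = (SOME r. {?q, r} \<in> E \<and> r \<noteq> ?p)"
      using W1[of "Suc n"] unfolding stS nbstep_def by simp
    ultimately show ?thesis unfolding w_def by simp
  qed
  have W4: "w n \<in> V" for n using sg_edge[OF sg W2[of n]] by blast
  have w0: "w 0 = a" unfolding w_def st_def by simp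
  have w1: "w 1 = b"
  proof -
    have "snd (st 0) = b" unfolding st_def by simp
    thus ?thesis using W1[of 0] by simp
  qed
  have fV: "finite V" using sg unfolding simple_graph_def by blast
  have "\<not> inj_on w {0..card V}"
  proof
    assume "inj_on w {0..card V}"
    from card_inj_on_le[OF this _ fV] W4 have "card {0..card V} \<le> card V" by blast
    thus False by simp
  qed
  then obtain i j where ij: "i \<noteq> j" "w i = w j" unfolding inj_on_def by blast
  define P where "P m = (\<exists>k<m. w k = w m)" for m
  have Pex: "\<exists>m. P m"
  proof (cases "i < j")
    case True thus ?thesis using ij unfolding P_def by blast
  next
    case False hence "j < i" using ij by simp
    thus ?thesis using ij unfolding P_def by metis
  qed
  define m where "m = (LEAST m. P m)"
  have Pm: "P m" unfolding m_def by (rule LeastI_ex[OF Pex])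
  then obtain k where k: "k < m" "w k = w m" unfolding P_def by blast
  have injm: "inj_on w {0..<m}"
  proof (rule inj_onI)
    fix p q assume p: "p \<in> {0..<m}" and q: "q \<in> {0..<m}" and e: "w p = w q"
    show "p = q"
    proof (rule ccontr)
      assume "p \<noteq> q"
      hence "P (max p q)"
      proof (cases "p < q")
        case True thus ?thesis unfolding P_def using e by (auto simp: max_def)
      next
        case False hence "q < p" using \<open>p \<noteq> q\<close> by simp
        thus ?thesis unfolding P_def using e by (auto simp: max_def)
      qed
      moreover have "max p q < m" using p q by auto
      ultimately show False using not_less_Least[of "max p q" P] unfolding m_def by blast
    qed
  qed
  define vs where "vs = map w [k..<m]"
  define n where "n = m - k"
  have lvs: "length vs = n" unfolding vs_def n_def by simp
  have vsi: "i < n \<Longrightarrow> vs ! i = w (k + i)" for i unfolding vs_def n_def by simp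
  have n1: "n \<noteq> 1"
  proof
    assume "n = 1" hence "m = Suc k" unfolding n_def using k by simp
    thus False using k(2) W2[of k] sg_edge[OF sg] by metis
  qed
  have n2: "n \<noteq> 2"
  proof
    assume "n = 2" hence "m = Suc (Suc k)" unfolding n_def using k by simp
    thus False using k(2) W3[of k] by metis
  qed
  have n3: "n \<ge> 3" using n1 n2 k unfolding n_def by linarith
  have dist: "distinct vs" unfolding vs_def
    by (simp add: distinct_map) (rule inj_on_subset[OF injm], auto)
  have edges: "{vs ! i, vs ! ((i + 1) mod length vs)} \<in> E" if i: "i < length vs" for i
  proof -
    have "vs ! ((i + 1) mod length vs) = w (Suc (k + i))"
    proof (cases "i + 1 < n")
      case True thus ?thesis using vsi[of "i+1"] lvs by simp
    next
      case False hence "i + 1 = n" using i lvs by simp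
      hence "(i + 1) mod length vs = 0" "Suc (k + i) = m" using lvs k unfolding n_def by auto
      thus ?thesis using vsi[of 0] n3 k(2) by simp
    qed
    moreover have "vs ! i = w (k + i)" using vsi i lvs by simp
    ultimately show ?thesis using W2[of "k + i"] by simp
  qed
  define D where "D = {{vs ! i, vs ! ((i + 1) mod length vs)} | i. i < length vs}"
  have cyc: "is_cycle E D" unfolding is_cycle_def D_def using n3 lvs dist edges by blast
  have UD: "\<Union>D = set vs" unfolding D_def by (rule cyc_union) (use n3 lvs in simp)
  have "a \<in> \<Union>D \<longrightarrow> b \<in> \<Union>D"
  proof
    assume "a \<in> \<Union>D"
    then obtain t where t: "t < n" "vs ! t = a" using UD lvs by (auto simp: in_set_conv_nth)
    hence "w (k + t) = w 0" using vsi w0 by simp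
    moreover have "k + t \<in> {0..<m}" "0 \<in> {0..<m}" using t k unfolding n_def by auto
    ultimately have "k + t = 0" using injm unfolding inj_on_def by blast
    hence "k = 0" by simp
    hence "vs ! 1 = b" using vsi[of 1] n3 w1 by simp
    moreover have "1 < length vs" using lvs n3 by simp
    ultimately have "b \<in> set vs" using nth_mem[of 1 vs] by simp
    thus "b \<in> \<Union>D" using UD by simp
  qed
  thus ?thesis using cyc by blast
qed


definition uni :: "'a set set \<Rightarrow> bool" where
  "uni E \<longleftrightarrow> (\<forall>C1 C2. is_cycle E C1 \<longrightarrow> is_cycle E C2 \<longrightarrow> C1 = C2)"

definition bnd :: "'a set set \<Rightarrow> nat" where
  "bnd E = (if \<exists>C. is_cycle E C then 3 else 2)"

definition good :: "'a set \<Rightarrow> 'a set set \<Rightarrow> 'a set \<Rightarrow> bool" where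
  "good V E Z \<longleftrightarrow> (\<exists>T. T \<subseteq> Z \<inter> V \<and> card T \<le> bnd E \<and> blocks V E T)"

lemma is_cycle_mono: "E' \<subseteq> E \<Longrightarrow> is_cycle E' C \<Longrightarrow> is_cycle E C"
  unfolding is_cycle_def by blast

lemma is_cycle_sub: "is_cycle E C \<Longrightarrow> C \<subseteq> E"
proof -
  assume "is_cycle E C"
  then obtain vs where "\<forall>i<length vs. {vs ! i, vs ! ((i + 1) mod length vs)} \<in> E"
     "C = {{vs ! i, vs ! ((i + 1) mod length vs)} | i. i < length vs}" unfolding is_cycle_def by blast
  thus ?thesis by auto
qed

lemma del_sg: "simple_graph V E \<Longrightarrow> simple_graph (V - S) {e\<in>E. e \<inter> S = {}}"
proof -
  assume sg: "simple_graph V E"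
  have "\<exists>u v. u \<noteq> v \<and> u \<in> V - S \<and> v \<in> V - S \<and> e = {u, v}" if e: "e \<in> E" "e \<inter> S = {}" for e
  proof -
    obtain u v where uv: "u \<noteq> v" "u \<in> V" "v \<in> V" "e = {u, v}" using sg e(1) unfolding simple_graph_def by blast
    hence "u \<notin> S" "v \<notin> S" using e(2) by auto
    thus ?thesis using uv by blast
  qed
  moreover have "finite (V - S)" using sg unfolding simple_graph_def by simp
  ultimately show ?thesis unfolding simple_graph_def by blast
qed

lemma del_uni: "uni E \<Longrightarrow> uni {e\<in>E. e \<inter> S = {}}"
proof -
  assume u: "uni E"
  have sub: "{e\<in>E. e \<inter> S = {}} \<subseteq> E" by blast
  show ?thesis unfolding uni_def
  proof (intro allI impI)
    fix C1 C2 assume "is_cycle {e\<in>E. e \<inter> S = {}} C1" "is_cycle {e\<in>E. e \<inter> S = {}} C2"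
    hence "is_cycle E C1" "is_cycle E C2" using is_cycle_mono[OF sub] by blast+
    thus "C1 = C2" using u unfolding uni_def by blast
  qed
qed

lemma del_bnd: "bnd {e\<in>E. e \<inter> S = {}} \<le> bnd E"
proof -
  have sub: "{e\<in>E. e \<inter> S = {}} \<subseteq> E" by blast
  show ?thesis unfolding bnd_def using is_cycle_mono[OF sub] by auto
qed

lemma sg_fin: "simple_graph V E \<Longrightarrow> finite V" unfolding simple_graph_def by blast

lemma closed_case:
  fixes V :: "'a set"
  assumes sg: "simple_graph V E" and un: "uni E" and AV: "A \<subseteq> V" "A \<noteq> {}"
    and c: "closed_set E A" and ZA: "Z \<inter> A = {}" and b: "blocks V E Z"
    and IH: "\<And>(V'::'a set) E' Z'. card V' < card V \<Longrightarrow> simple_graph V' E' \<Longrightarrow> uni E' \<Longrightarrow> blocks V' E' Z' \<Longrightarrow> good V' E' Z'"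
  shows "good V E Z"
proof -
  have f: "finite V" using sg_fin[OF sg] .
  have "V - A \<subset> V" using AV by blast
  hence cV: "card (V - A) < card V" using psubset_card_mono[OF f] by blast
  have "blocks (V - A) {e\<in>E. e \<inter> A = {}} Z" using closed_max2[OF f c ZA b] .
  note bl = this
  have "good (V - A) {e\<in>E. e \<inter> A = {}} Z"
    by (rule IH[of "V - A" "{e\<in>E. e \<inter> A = {}}" Z]) (rule cV, rule del_sg[OF sg], rule del_uni[OF un], rule bl)
  then obtain T where T: "T \<subseteq> Z \<inter> (V - A)" "card T \<le> bnd {e\<in>E. e \<inter> A = {}}"
     "blocks (V - A) {e\<in>E. e \<inter> A = {}} T" unfolding good_def by blast
  have "blocks V E T" using closed_back[OF f c T(3)] .
  moreover have "card T \<le> bnd E" using T(2) del_bnd[of E A] by linarith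
  moreover have "T \<subseteq> Z \<inter> V" using T(1) by blast
  ultimately show ?thesis unfolding good_def by blast
qed

lemma leaf_case:
  fixes V :: "'a set"
  assumes sg: "simple_graph V E" and un: "uni E" and b: "blocks V E Z"
    and xy: "{x,y} \<in> E" and lf: "\<And>u. {x,u} \<in> E \<Longrightarrow> u = y"
    and IH: "\<And>(V'::'a set) E' Z'. card V' < card V \<Longrightarrow> simple_graph V' E' \<Longrightarrow> uni E' \<Longrightarrow> blocks V' E' Z' \<Longrightarrow> good V' E' Z'"
  shows "good V E Z"
proof -
  have f: "finite V" using sg_fin[OF sg] .
  interpret L: leafctx V E x y by (rule leafctx.intro[OF f sg xy lf])
  let ?V' = "V - {x,y}" and ?E' = "{e\<in>E. e \<inter> {x,y} = {}}"
  have "?V' \<subset> V" using L.xyne by blast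
  hence cV: "card ?V' < card V" using psubset_card_mono[OF f] by blast
  have sg': "simple_graph ?V' ?E'" by (rule del_sg[OF sg])
  have un': "uni ?E'" by (rule del_uni[OF un])
  have bd: "bnd ?E' \<le> bnd E" by (rule del_bnd)
  have b2: "bnd E \<ge> 2" unfolding bnd_def by auto
  show ?thesis
  proof (cases "x \<in> Z")
    case False
    have bl: "blocks ?V' ?E' Z" unfolding blocks_def
    proof (intro allI impI)
      fix K assume K: "maxind ?V' ?E' K"
      have "insert x K \<inter> Z \<noteq> {}" using L.leaf_a[OF K] b unfolding blocks_def by blast
      thus "K \<inter> Z \<noteq> {}" using False by blast
    qed
    have "good ?V' ?E' Z" by (rule IH[of ?V' ?E' Z]) (rule cV, rule sg', rule un', rule bl)
    then obtain T where T: "T \<subseteq> Z \<inter> ?V'" "card T \<le> bnd ?E'" "blocks ?V' ?E' T" unfolding good_def by blast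
    have "blocks V E T" unfolding blocks_def
    proof (intro allI impI)
      fix J assume J: "maxind V E J"
      have "(J - {x,y}) \<inter> T \<noteq> {}" using L.leaf_c[OF J] T(3) unfolding blocks_def by blast
      thus "J \<inter> T \<noteq> {}" by blast
    qed
    thus ?thesis unfolding good_def using T(1,2) bd by (intro exI[of _ T]) auto
  next
    case xZ: True
    show ?thesis
    proof (cases "y \<in> Z")
      case True
      have "blocks V E {x,y}" unfolding blocks_def
      proof (intro allI impI)
        fix J assume J: "maxind V E J"
        show "J \<inter> {x,y} \<noteq> {}" using L.leaf_b[OF J] by blast
      qed
      moreover have "card {x,y} \<le> bnd E" using b2 L.xyne(1) by simp
      moreover have "{x,y} \<subseteq> Z \<inter> V" using xZ True L.xyne by blast
      ultimately show ?thesis unfolding good_def by blast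
    next
      case yZ: False
      define R where "R = {r. {y,r} \<in> E} - {x}"
      have bl: "blocks ?V' ?E' ((Z - {x}) \<union> R)" unfolding blocks_def
      proof (intro allI impI)
        fix K assume K: "maxind ?V' ?E' K"
        have Ki: "independent_set V E K" "K \<inter> {x,y} = {}"
          using K L.ind'_iff unfolding maxind_def by auto
        show "K \<inter> ((Z - {x}) \<union> R) \<noteq> {}"
        proof (cases "K \<inter> R = {}")
          case False thus ?thesis by blast
        next
          case True
          have nr: "{y,r} \<notin> E" if r: "r \<in> K" for r
          proof
            assume "{y,r} \<in> E"
            moreover have "r \<noteq> x" using r Ki(2) by blast
            ultimately have "r \<in> R" unfolding R_def by blast
            thus False using r True by blast
          qed
          have "insert y K \<inter> Z \<noteq> {}" using L.leaf_y[OF K nr] b unfolding blocks_def by blast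
          then obtain z where "z \<in> K" "z \<in> Z" using yZ by blast
          moreover have "z \<noteq> x" using \<open>z \<in> K\<close> Ki(2) by blast
          ultimately show ?thesis by blast
        qed
      qed
      have "good ?V' ?E' ((Z - {x}) \<union> R)" by (rule IH[of ?V' ?E']) (rule cV, rule sg', rule un', rule bl)
      then obtain T where T: "T \<subseteq> ((Z - {x}) \<union> R) \<inter> ?V'" "card T \<le> bnd ?E'" "blocks ?V' ?E' T"
        unfolding good_def by blast
      have fT: "finite T" using T(1) f by (meson finite_Diff finite_subset inf_le2 subset_trans)
      define T' where "T' = (T - R) \<union> (if T \<inter> R = {} then {} else {x})"
      have s1: "T - R \<subseteq> Z \<inter> V" using T(1) by blast
      have s2: "x \<in> Z \<inter> V" using xZ L.xyne by blast
      have T'sub: "T' \<subseteq> Z \<inter> V"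
      proof (cases "T \<inter> R = {}")
        case True thus ?thesis unfolding T'_def using s1 by simp
      next
        case False thus ?thesis unfolding T'_def using s1 s2 by simp
      qed
      have cT': "card T' \<le> card T"
      proof (cases "T \<inter> R = {}")
        case True hence "T' = T" unfolding T'_def by (simp add: Diff_triv)
        thus ?thesis by simp
      next
        case False
        hence "T' = insert x (T - R)" unfolding T'_def by simp
        moreover have "T - R \<subset> T" using False by blast
        hence "card (T - R) < card T" using psubset_card_mono[OF fT] by blast
        moreover have "card (insert x (T - R)) \<le> Suc (card (T - R))"
          using card_insert_if[of "T - R" x] fT by auto
        ultimately have "card T' \<le> Suc (card (T - R))" "card (T - R) < card T" by simp_all
        thus ?thesis by linarith
      qed
      have "blocks V E T'" unfolding blocks_def
      proof (intro allI impI)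
        fix J assume J: "maxind V E J"
        have Ji: "independent_set V E J" using J unfolding maxind_def by auto
        obtain t where t: "t \<in> J - {x,y}" "t \<in> T" using L.leaf_c[OF J] T(3) unfolding blocks_def by blast
        show "J \<inter> T' \<noteq> {}"
        proof (cases "x \<in> J")
          case True
          show ?thesis
          proof (cases "t \<in> R")
            case True hence "x \<in> T'" using t unfolding T'_def by auto
            thus ?thesis using \<open>x \<in> J\<close> by blast
          next
            case False hence "t \<in> T'" using t unfolding T'_def by auto
            thus ?thesis using t by blast
          qed
        next
          case False
          hence "y \<in> J" using L.leaf_b[OF J] by blast
          have "t \<notin> R"
          proof
            assume "t \<in> R" hence "{y,t} \<in> E" unfolding R_def by blast
            moreover have "t \<in> J" using t by blast
            ultimately show False using ind_edge[OF Ji \<open>y \<in> J\<close>, of t] by blast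
          qed
          hence "t \<in> T'" using t unfolding T'_def by auto
          thus ?thesis using t by blast
        qed
      qed
      thus ?thesis unfolding good_def using T'sub cT' T(2) bd by (intro exI[of _ T']) auto
    qed
  qed
qed

lemma isolated_case:
  fixes V :: "'a set"
  assumes sg: "simple_graph V E" and un: "uni E" and b: "blocks V E Z"
    and xV: "x \<in> V" and iso: "\<And>u. {x,u} \<notin> E"
    and IH: "\<And>(V'::'a set) E' Z'. card V' < card V \<Longrightarrow> simple_graph V' E' \<Longrightarrow> uni E' \<Longrightarrow> blocks V' E' Z' \<Longrightarrow> good V' E' Z'"
  shows "good V E Z"
proof (cases "x \<in> Z")
  case True
  have f: "finite V" using sg_fin[OF sg] .
  have "blocks V E {x}" unfolding blocks_def
  proof (intro allI impI)
    fix J assume J: "maxind V E J"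
    have Ji: "independent_set V E J" using J unfolding maxind_def by auto
    show "J \<inter> {x} \<noteq> {}"
    proof
      assume n: "J \<inter> {x} = {}"
      have "independent_set V E (insert x J)"
        by (rule ind_insert[OF Ji xV sg_noloop[OF sg]]) (rule iso)
      moreover have "card (insert x J) = card J + 1" using n ind_fin_set[OF f Ji] by auto
      ultimately have "card J + 1 \<le> alpha V E" using alpha_ge[OF f] by metis
      thus False using J unfolding maxind_def by simp
    qed
  qed
  moreover have "bnd E \<ge> 1" unfolding bnd_def by auto
  ultimately show ?thesis unfolding good_def using True xV by (intro exI[of _ "{x}"]) auto
next
  case False
  have c: "closed_set E {x}" unfolding closed_set_def
  proof
    fix e assume e: "e \<in> E"
    then obtain u v where uv: "e = {u,v}" "u \<noteq> v" using sg unfolding simple_graph_def by blast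
    have "x \<notin> e"
    proof
      assume "x \<in> e"
      hence "e = {x,v} \<or> e = {x,u}" using uv by auto
      thus False using e iso by auto
    qed
    thus "e \<subseteq> {x} \<or> e \<inter> {x} = {}" by blast
  qed
  show ?thesis by (rule closed_case[OF sg un _ _ c _ b IH]) (use xV False in auto)
qed

lemma vertex_case:
  fixes V :: "'a set"
  assumes sg: "simple_graph V E" and un: "uni E" and b: "blocks V E Z"
    and vZ: "v \<in> Z" and vV: "v \<in> V" and cyc: "\<exists>C. is_cycle E C"
    and acyc: "\<And>D. \<not> is_cycle {e\<in>E. e \<inter> {v} = {}} D"
    and IH: "\<And>(V'::'a set) E' Z'. card V' < card V \<Longrightarrow> simple_graph V' E' \<Longrightarrow> uni E' \<Longrightarrow> blocks V' E' Z' \<Longrightarrow> good V' E' Z'"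
  shows "good V E Z"
proof -
  have f: "finite V" using sg_fin[OF sg] .
  let ?V' = "V - {v}" and ?E' = "{e\<in>E. e \<inter> {v} = {}}"
  have b3: "bnd E = 3" using cyc unfolding bnd_def by auto
  have b2: "bnd ?E' = 2" using acyc unfolding bnd_def by auto
  have fV': "finite ?V'" using f by simp
  show ?thesis
  proof (cases "alpha ?V' ?E' = alpha V E")
    case eq: True
    have "?V' \<subset> V" using vV by blast
    hence cV: "card ?V' < card V" using psubset_card_mono[OF f] by blast
    have bl: "blocks ?V' ?E' Z" unfolding blocks_def
    proof (intro allI impI)
      fix K assume K: "maxind ?V' ?E' K"
      hence "independent_set V E K" using ind_del[of V "{v}" E K] unfolding maxind_def by auto
      hence "maxind V E K" using K eq unfolding maxind_def by auto
      thus "K \<inter> Z \<noteq> {}" using b unfolding blocks_def by blast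
    qed
    have "good ?V' ?E' Z" by (rule IH[of ?V' ?E' Z]) (rule cV, rule del_sg[OF sg], rule del_uni[OF un], rule bl)
    then obtain T where T: "T \<subseteq> Z \<inter> ?V'" "card T \<le> 2" "blocks ?V' ?E' T" unfolding good_def b2 by blast
    have fT: "finite T" using T(1) fV' finite_subset by blast
    have "blocks V E (insert v T)" unfolding blocks_def
    proof (intro allI impI)
      fix J assume J: "maxind V E J"
      show "J \<inter> insert v T \<noteq> {}"
      proof (cases "v \<in> J")
        case True thus ?thesis by blast
      next
        case False
        hence "independent_set ?V' ?E' J" using J ind_del[of V "{v}" E J] unfolding maxind_def by auto
        hence "maxind ?V' ?E' J" using J eq unfolding maxind_def by auto
        thus ?thesis using T(3) unfolding blocks_def by blast
      qed
    qed
    moreover have "card (insert v T) \<le> 3"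
    proof -
      have "card (insert v T) \<le> Suc (card T)" using card_insert_if[of T v] fT by auto
      thus ?thesis using T(2) by linarith
    qed
    ultimately show ?thesis unfolding good_def b3 using T(1) vZ vV by (intro exI[of _ "insert v T"]) auto
  next
    case False
    hence lt: "alpha ?V' ?E' < alpha V E" using alpha_del_le[OF f, of "{v}" E] by simp
    have "blocks V E {v}" unfolding blocks_def
    proof (intro allI impI)
      fix J assume J: "maxind V E J"
      show "J \<inter> {v} \<noteq> {}"
      proof
        assume "J \<inter> {v} = {}"
        hence "independent_set ?V' ?E' J" using J ind_del[of V "{v}" E J] unfolding maxind_def by auto
        hence "card J \<le> alpha ?V' ?E'" using alpha_ge[OF fV'] by blast
        thus False using lt J unfolding maxind_def by simp
      qed
    qed
    thus ?thesis unfolding good_def b3 using vZ vV by (intro exI[of _ "{v}"]) auto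
  qed
qed

lemma mindeg_case:
  fixes V :: "'a set"
  assumes sg: "simple_graph V E" and un: "uni E" and b: "blocks V E Z"
    and deg: "\<And>z. z \<in> V \<Longrightarrow> \<exists>y1 y2. y1 \<noteq> y2 \<and> {z,y1} \<in> E \<and> {z,y2} \<in> E"
    and IH: "\<And>(V'::'a set) E' Z'. card V' < card V \<Longrightarrow> simple_graph V' E' \<Longrightarrow> uni E' \<Longrightarrow> blocks V' E' Z' \<Longrightarrow> good V' E' Z'"
  shows "good V E Z"
proof -
  have f: "finite V" using sg_fin[OF sg] .
  obtain z where z: "z \<in> Z" "z \<in> V" using blocks_nonempty[OF f b] by blast
  obtain y1 where y1: "{z,y1} \<in> E" using deg[OF z(2)] by blast
  obtain C where C: "is_cycle E C" using walk_cycle[OF sg deg y1] by blast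
  have CE: "C \<subseteq> E" using is_cycle_sub[OF C] .
  define A where "A = \<Union>C"
  have AV: "A \<subseteq> V"
  proof
    fix p assume "p \<in> A"
    then obtain e where e: "e \<in> C" "p \<in> e" unfolding A_def by blast
    then obtain u v where "e = {u,v}" "u \<in> V" "v \<in> V" using CE sg unfolding simple_graph_def by blast
    thus "p \<in> V" using e by blast
  qed
  have Ane: "A \<noteq> {}"
  proof -
    obtain vs where "length vs \<ge> 3" "\<Union>C = set vs" using is_cycle_union[OF C] by blast
    thus ?thesis unfolding A_def by auto
  qed
  show ?thesis
  proof (cases "Z \<inter> A = {}")
    case False
    then obtain v where v: "v \<in> Z" "v \<in> A" by blast
    have acyc: "\<not> is_cycle {e\<in>E. e \<inter> {v} = {}} D" for D
    proof
      assume D: "is_cycle {e\<in>E. e \<inter> {v} = {}} D"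
      have "is_cycle E D" by (rule is_cycle_mono[OF _ D]) blast
      hence "D = C" using un C unfolding uni_def by blast
      moreover have "D \<subseteq> {e\<in>E. e \<inter> {v} = {}}" using is_cycle_sub[OF D] .
      moreover obtain e where "e \<in> C" "v \<in> e" using v(2) unfolding A_def by blast
      ultimately show False by blast
    qed
    show ?thesis by (rule vertex_case[OF sg un b v(1) _ _ acyc IH]) (use v AV C in auto)
  next
    case True
    have noout: "q \<in> A" if pq: "{p,q} \<in> E" "p \<in> A" for p q
    proof (rule ccontr)
      assume q: "q \<notin> A"
      obtain D where D: "is_cycle E D" "p \<in> \<Union>D \<longrightarrow> q \<in> \<Union>D" using walk_cycle[OF sg deg pq(1)] by blast
      have "D = C" using un C D(1) unfolding uni_def by blast
      thus False using D(2) pq(2) q unfolding A_def by blast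
    qed
    have c: "closed_set E A" unfolding closed_set_def
    proof
      fix e assume e: "e \<in> E"
      then obtain p q where pq: "e = {p,q}" using sg unfolding simple_graph_def by blast
      have "{q,p} \<in> E" using e pq by (simp add: insert_commute)
      hence "(p \<in> A) = (q \<in> A)" using noout[of p q] noout[of q p] e pq by blast
      thus "e \<subseteq> A \<or> e \<inter> A = {}" using pq by blast
    qed
    show ?thesis by (rule closed_case[OF sg un AV Ane c True b IH])
  qed
qed

lemma main_good:
  fixes V :: "'a set"
  shows "simple_graph V E \<Longrightarrow> uni E \<Longrightarrow> blocks V E Z \<Longrightarrow> good V E Z"
proof (induction "card V" arbitrary: V E Z rule: less_induct)
  case less
  have IH: "\<And>(V'::'a set) E' Z'. card V' < card V \<Longrightarrow> simple_graph V' E' \<Longrightarrow> uni E' \<Longrightarrow> blocks V' E' Z' \<Longrightarrow> good V' E' Z'"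
    using less.hyps by blast
  show ?case
  proof (cases "\<forall>z\<in>V. \<exists>y1 y2. y1 \<noteq> y2 \<and> {z,y1} \<in> E \<and> {z,y2} \<in> E")
    case True
    show ?thesis by (rule mindeg_case[OF less.prems _ IH]) (use True in blast)
  next
    case False
    then obtain x where x: "x \<in> V" "\<not> (\<exists>y1 y2. y1 \<noteq> y2 \<and> {x,y1} \<in> E \<and> {x,y2} \<in> E)" by blast
    show ?thesis
    proof (cases "\<exists>y. {x,y} \<in> E")
      case True
      then obtain y where y: "{x,y} \<in> E" by blast
      have lf: "u = y" if "{x,u} \<in> E" for u using x(2) y that by blast
      show ?thesis by (rule leaf_case[OF less.prems y lf IH])
    next
      case False
      hence iso: "{x,u} \<notin> E" for u by blast
      show ?thesis by (rule isolated_case[OF less.prems x(1) iso IH])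
    qed
  qed
qed

lemma card3_set: "finite T \<Longrightarrow> T \<noteq> {} \<Longrightarrow> card T \<le> 3 \<Longrightarrow> \<exists>u v w. T = {u,v,w}"
proof -
  assume f: "finite T" and ne: "T \<noteq> {}" and c: "card T \<le> 3"
  have "card T = 1 \<or> card T = 2 \<or> card T = 3" using f ne c by (cases "card T") (auto simp: card_eq_0_iff)
  thus ?thesis
  proof (elim disjE)
    assume "card T = 1" then obtain u where "T = {u}" by (auto simp: card_1_singleton_iff)
    thus ?thesis by (intro exI[of _ u]) auto
  next
    assume "card T = 2" then obtain u v where "T = {u,v}" by (auto simp: card_2_iff)
    thus ?thesis by (intro exI[of _ u] exI[of _ v]) auto
  next
    assume "card T = 3" then obtain u v w where "T = {u,v,w}" by (auto simp: card_3_iff)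
    thus ?thesis by blast
  qed
qed

theorem lemma4:
  fixes V :: "'a set" and E :: "'a set set" and Z :: "'a set"
  assumes "pseudotree V E"
    and "alpha V E > case_prod alpha (del_verts V E Z)"
  shows "\<exists>u v w. u \<in> Z \<inter> V \<and> v \<in> Z \<inter> V \<and> w \<in> Z \<inter> V \<and>
           alpha V E > case_prod alpha (del_verts V E {u, v, w})"
proof -
  have sg: "simple_graph V E" and un: "uni E" using assms(1) unfolding pseudotree_def uni_def by auto
  have f: "finite V" using sg_fin[OF sg] .
  have b: "blocks V E Z" using assms(2) blocks_iff[OF f] unfolding del_verts_def by simp
  obtain T where T: "T \<subseteq> Z \<inter> V" "card T \<le> bnd E" "blocks V E T" using main_good[OF sg un b] unfolding good_def by blast
  have fT: "finite T" using T(1) f finite_subset by blast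
  have ne: "T \<noteq> {}" using blocks_nonempty[OF f T(3)] by blast
  have "card T \<le> 3" using T(2) unfolding bnd_def by (auto split: if_splits)
  then obtain u v w where uvw: "T = {u,v,w}" using card3_set[OF fT ne] by blast
  have "alpha (V - {u,v,w}) {e\<in>E. e \<inter> {u,v,w} = {}} < alpha V E" using T(3) uvw blocks_iff[OF f] by simp
  thus ?thesis using T(1) uvw unfolding del_verts_def by auto
qed

end
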